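(* For $n\ge 2$, $t\ge0$ and $2\le k\le n$: \[ \int_0^t q_{n2}(w)\,dw=q_{n1}(t),\qquad \int_0^t q_{n2}(k;w)\,dw=q_{n1}(k;t),\qquad \int_0^t (t-w)\,q_{n2}(w)\,dw=q_{n1}(1;t). \]
   Context: Kingman coalescent: for $n\ge2$, let $T_n,\dots,T_2$ be independent, $T_k$ exponential with rate $\binom{k}{2}$, and put $T_1=\infty$. For $t\ge0$ let $A_n(t)$ be the number of lineages at time $t$ back, i.e. $A_n(t)=l$ iff $T_n+\dots+T_{l+1}\le t<T_n+\dots+T_l$. Write $q_{nl}(t)=\mathbb P(A_n(t)=l)$. For $1\le k\le n$ let $T^{(t)}_k$ be the Lebesgue measure of $\{s\in[0,t]:A_n(s)=k\}$, and for $1\le l\le k\le n$ define $q_{nl}(k;t)=\mathbb E\big[T^{(t)}_k\,\mathbb I\{A_n(t)=l\}\big]$. *)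

theory Defs
  imports "HOL-Probability.Probability"
begin

text \<open>The sample space is the product over
  k in {2..n} of exponential distributions with rate (k choose 2); the coordinate
  omega k is the holding time T_k.  T_1 = infinity is encoded by the convention that
  level 1 is never left.\<close>

definition kingman_space :: "nat \<Rightarrow> (nat \<Rightarrow> real) measure" where
  "kingman_space n = (\<Pi>\<^sub>M k\<in>{2..n}.
      density lborel (\<lambda>x. ennreal (exponential_density (real (k choose 2)) x)))"

definition lineages_cond :: "nat \<Rightarrow> (nat \<Rightarrow> real) \<Rightarrow> real \<Rightarrow> nat \<Rightarrow> bool" where
  "lineages_cond n \<omega> t l \<longleftrightarrow>
     (\<Sum>j\<in>{l+1..n}. \<omega> j) \<le> t \<and> (l = 1 \<or> t < (\<Sum>j\<in>{l..n}. \<omega> j))"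

definition lineages :: "nat \<Rightarrow> (nat \<Rightarrow> real) \<Rightarrow> real \<Rightarrow> nat" where
  "lineages n \<omega> t = (THE l. l \<in> {1..n} \<and> lineages_cond n \<omega> t l)"

definition q :: "nat \<Rightarrow> nat \<Rightarrow> real \<Rightarrow> real" where
  "q n l t = measure (kingman_space n) {\<omega> \<in> space (kingman_space n). lineages n \<omega> t = l}"

definition occ_time :: "nat \<Rightarrow> nat \<Rightarrow> real \<Rightarrow> (nat \<Rightarrow> real) \<Rightarrow> real" where
  "occ_time n k t \<omega> = measure lborel {s \<in> {0..t}. lineages n \<omega> s = k}"

definition q_occ :: "nat \<Rightarrow> nat \<Rightarrow> nat \<Rightarrow> real \<Rightarrow> real" where
  "q_occ n l k t = (\<integral>\<omega>. occ_time n k t \<omega> * indicator {\<omega>. lineages n \<omega> t = l} \<omega> \<partial>kingman_space n)"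

end

theory Submission
  imports Defs
begin
definition EM :: "nat \<Rightarrow> real measure" where
  "EM k = density lborel (\<lambda>x. ennreal (exponential_density (real (max 2 k choose 2)) x))"

lemma KS: "kingman_space n = PiM {2..n} EM"
  unfolding kingman_space_def EM_def by (intro PiM_cong) (auto simp: max_def)

lemma prob_EM: "prob_space (EM k)"
  unfolding EM_def by (rule prob_space_exponential_density) (simp add: zero_less_binomial_iff)

lemma ppEM: "product_prob_space EM"
  by (simp add: product_prob_space_def product_prob_space_axioms_def product_sigma_finite_def prob_EM prob_space_imp_sigma_finite)

lemma psfEM: "product_sigma_finite EM"
  using ppEM by (simp add: product_prob_space_def)

lemma prob_KS: "prob_space (kingman_space n)"
  unfolding KS by (rule prob_space_PiM) (simp add: prob_EM)

lemma sets_EM[simp, measurable_cong]: "sets (EM k) = sets borel"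
  by (simp add: EM_def)

lemma space_EM[simp]: "space (EM k) = UNIV"
  by (simp add: EM_def)

lemma comp_meas[measurable]: "(\<lambda>\<omega>. \<omega> j) \<in> borel_measurable (kingman_space n)"
proof (cases "j \<in> {2..n}")
  case True thus ?thesis unfolding KS by measurable
next
  case False
  have "(\<lambda>\<omega>. \<omega> j) \<in> borel_measurable (kingman_space n) \<longleftrightarrow> (\<lambda>\<omega>. undefined::real) \<in> borel_measurable (kingman_space n)"
    by (rule measurable_cong) (use False in \<open>auto simp: KS space_PiM PiE_def extensional_def\<close>)
  thus ?thesis by simp
qed

definition S :: "nat \<Rightarrow> nat \<Rightarrow> (nat\<Rightarrow>real) \<Rightarrow> real" where
  "S n l \<omega> = (\<Sum>j\<in>{l..n}. \<omega> j)"

definition pos :: "nat \<Rightarrow> (nat\<Rightarrow>real) \<Rightarrow> bool" where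
  "pos n \<omega> \<longleftrightarrow> (\<forall>j\<in>{2..n}. 0 \<le> \<omega> j)"

lemma S_mono: assumes "pos n \<omega>" "2 \<le> l" "l \<le> l'" shows "S n l' \<omega> \<le> S n l \<omega>"
  unfolding S_def using assms by (intro sum_mono2) (auto simp: pos_def)

lemma S_nonneg: assumes "pos n \<omega>" "2 \<le> l" shows "0 \<le> S n l \<omega>"
  unfolding S_def using assms by (intro sum_nonneg) (auto simp: pos_def)

lemma S_empty: "S n (Suc n) \<omega> = 0"
  by (simp add: S_def)

lemma cond_S: "lineages_cond n \<omega> t l \<longleftrightarrow> S n (l+1) \<omega> \<le> t \<and> (l = 1 \<or> t < S n l \<omega>)"
  by (simp add: lineages_cond_def S_def)

lemma lin_unique:
  assumes "pos n \<omega>" "0 \<le> s" "1 \<le> n"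
  shows "\<exists>!l. l \<in> {1..n} \<and> lineages_cond n \<omega> s l"
proof
  define l0 where "l0 = (LEAST l. 1 \<le> l \<and> S n (l+1) \<omega> \<le> s)"
  have ex: "1 \<le> n \<and> S n (n+1) \<omega> \<le> s" using assms S_empty by simp
  have l0: "1 \<le> l0 \<and> S n (l0+1) \<omega> \<le> s" unfolding l0_def by (rule LeastI[where P="\<lambda>l. 1 \<le> l \<and> S n (l+1) \<omega> \<le> s", OF ex])
  have l0n: "l0 \<le> n" unfolding l0_def by (rule Least_le[where P="\<lambda>l. 1 \<le> l \<and> S n (l+1) \<omega> \<le> s", OF ex])
  have "l0 = 1 \<or> s < S n l0 \<omega>"
  proof (rule ccontr)
    assume nt: "\<not> (l0 = 1 \<or> s < S n l0 \<omega>)"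
    hence "1 \<le> l0 - 1 \<and> S n (l0 - 1 + 1) \<omega> \<le> s" using l0 by auto
    hence "l0 \<le> l0 - 1" unfolding l0_def by (rule Least_le[where P="\<lambda>l. 1 \<le> l \<and> S n (l+1) \<omega> \<le> s"])
    thus False using l0 nt by auto
  qed
  thus "l0 \<in> {1..n} \<and> lineages_cond n \<omega> s l0" using l0 l0n by (simp add: cond_S)
  fix l assume l: "l \<in> {1..n} \<and> lineages_cond n \<omega> s l"
  have *: False if a: "a \<in> {1..n}" "lineages_cond n \<omega> s a" "b \<in> {1..n}" "lineages_cond n \<omega> s b" "a < b" for a b
  proof -
    have "s < S n b \<omega>" using a by (auto simp: cond_S)
    moreover have "S n b \<omega> \<le> S n (a+1) \<omega>" using a assms by (intro S_mono) auto
    moreover have "S n (a+1) \<omega> \<le> s" using a by (auto simp: cond_S)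
    ultimately show False by simp
  qed
  show "l = l0"
    using *[of l l0] *[of l0 l] l \<open>l0 \<in> {1..n} \<and> lineages_cond n \<omega> s l0\<close>
    by (cases l l0 rule: linorder_cases) auto
qed

lemma lin_eq:
  assumes "pos n \<omega>" "0 \<le> s" "1 \<le> n" "l \<in> {1..n}"
  shows "lineages n \<omega> s = l \<longleftrightarrow> lineages_cond n \<omega> s l"
proof -
  note u = lin_unique[OF assms(1-3)]
  have "lineages n \<omega> s \<in> {1..n} \<and> lineages_cond n \<omega> s (lineages n \<omega> s)"
    unfolding lineages_def by (rule theI'[OF u])
  thus ?thesis using u assms(4) by blast
qed


lemma lin_meas:
  assumes [measurable]: "\<And>j. (\<lambda>x. W x j) \<in> borel_measurable N" "T \<in> borel_measurable N"
  shows "(\<lambda>x. lineages n (W x) (T x)) \<in> measurable N (count_space UNIV)"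
proof -
  define B where "B x = {l\<in>{1..n}. lineages_cond n (W x) (T x) l}" for x
  have eq: "lineages n (W x) (T x) = The (\<lambda>l. l \<in> B x)" for x
    unfolding lineages_def B_def by simp
  have pc: "{x\<in>space N. B x = C} \<in> sets N" for C
  proof -
    have "{x\<in>space N. B x = C} = {x\<in>space N. \<forall>l\<in>{1..n}. (lineages_cond n (W x) (T x) l \<longleftrightarrow> l \<in> C)} \<inter> {x\<in>space N. C \<subseteq> {1..n}}"
      unfolding B_def by auto
    also have "\<dots> \<in> sets N" unfolding lineages_cond_def by measurable
    finally show ?thesis .
  qed
  show ?thesis
  proof (subst measurable_count_space_eq2_countable, safe)
    fix a :: nat
    have "(\<lambda>x. lineages n (W x) (T x)) -` {a} \<inter> space N
        = (\<Union>C\<in>{C. C \<subseteq> {1..n} \<and> The (\<lambda>l. l \<in> C) = a}. {x\<in>space N. B x = C})"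
      unfolding eq B_def by auto
    also have "\<dots> \<in> sets N"
      by (intro sets.finite_UN pc) (auto intro: finite_subset[of _ "Pow {1..n}"])
    finally show "(\<lambda>x. lineages n (W x) (T x)) -` {a} \<inter> space N \<in> sets N" .
  qed auto
qed


lemma lin_meas_K[measurable]: "(\<lambda>\<omega>. lineages n \<omega> t) \<in> measurable (kingman_space n) (count_space UNIV)"
  using lin_meas[of "\<lambda>x. x" "kingman_space n" "\<lambda>_. t"] by simp

lemma occ_meas[measurable]: "occ_time n k t \<in> borel_measurable (kingman_space n)"
proof -
  let ?K = "kingman_space n"
  define Q where "Q = {p \<in> space (?K \<Otimes>\<^sub>M lborel). snd p \<in> {0..t} \<and> lineages n (fst p) (snd p) = k}"
  have lm: "(\<lambda>p. lineages n (fst p) (snd p)) \<in> measurable (?K \<Otimes>\<^sub>M lborel) (count_space UNIV)"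
    by (rule lin_meas) measurable
  have "Q \<in> sets (?K \<Otimes>\<^sub>M lborel)" unfolding Q_def using lm by measurable
  from lborel.measurable_emeasure_Pair[OF this]
  have "(\<lambda>\<omega>. enn2real (emeasure lborel (Pair \<omega> -` Q))) \<in> borel_measurable ?K" by measurable
  moreover have "Pair \<omega> -` Q = {s \<in> {0..t}. lineages n \<omega> s = k}" if "\<omega> \<in> space ?K" for \<omega>
    using that by (auto simp: Q_def space_pair_measure)
  ultimately show ?thesis unfolding occ_time_def measure_def
    by (subst measurable_cong) auto
qed

declare comp_meas[measurable del]

lemma AE_pos: "AE \<omega> in kingman_space n. pos n \<omega>"
  unfolding pos_def
proof (rule AE_finite_allI, simp)
  fix j assume j: "j \<in> {2..n}"
  have "AE x in EM j. 0 \<le> x"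
    unfolding EM_def by (subst AE_density) (auto simp: exponential_density_def)
  thus "AE \<omega> in kingman_space n. 0 \<le> \<omega> j"
    unfolding KS using product_prob_space.AE_component[OF ppEM j] by blast
qed


lemma S_step: "k \<le> n \<Longrightarrow> S n k \<omega> = \<omega> k + S n (Suc k) \<omega>"
  unfolding S_def by (simp add: sum.atLeast_Suc_atMost)

lemma S23: "2 \<le> n \<Longrightarrow> S n 2 \<omega> = \<omega> 2 + S n 3 \<omega>"
  using S_step[of 2 n \<omega>] by (simp add: eval_nat_numeral)

lemma lin1: assumes "pos n \<omega>" "0 \<le> w" "2 \<le> n"
  shows "lineages n \<omega> w = 1 \<longleftrightarrow> S n 3 \<omega> + \<omega> 2 \<le> w"
proof -
  have "lineages n \<omega> w = 1 \<longleftrightarrow> lineages_cond n \<omega> w 1" using lin_eq[OF assms(1,2), of 1] assms by simp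
  also have "\<dots> \<longleftrightarrow> S n 2 \<omega> \<le> w" by (simp add: lineages_cond_def S_def eval_nat_numeral)
  finally show ?thesis using S23[of n \<omega>] assms by linarith
qed

lemma lin2: assumes "pos n \<omega>" "0 \<le> w" "2 \<le> n"
  shows "lineages n \<omega> w = 2 \<longleftrightarrow> S n 3 \<omega> \<le> w \<and> w < S n 3 \<omega> + \<omega> 2"
proof -
  have "lineages n \<omega> w = 2 \<longleftrightarrow> lineages_cond n \<omega> w 2" using lin_eq[OF assms(1,2), of 2] assms by simp
  also have "\<dots> \<longleftrightarrow> S n 3 \<omega> \<le> w \<and> w < S n 2 \<omega>" by (simp add: lineages_cond_def S_def eval_nat_numeral)
  finally show ?thesis using S23[of n \<omega>] assms by linarith
qed

lemma occ_full: assumes "pos n \<omega>" "0 \<le> w" "2 \<le> k" "k \<le> n" "S n k \<omega> \<le> w"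
  shows "occ_time n k w \<omega> = \<omega> k"
proof -
  have "{s \<in> {0..w}. lineages n \<omega> s = k} = {S n (k+1) \<omega> ..< S n k \<omega>}"
  proof (intro set_eqI iffI)
    fix s assume "s \<in> {s \<in> {0..w}. lineages n \<omega> s = k}"
    thus "s \<in> {S n (k+1) \<omega> ..< S n k \<omega>}" using lin_eq[OF assms(1), of s k] assms by (auto simp: cond_S)
  next
    fix s assume s: "s \<in> {S n (k+1) \<omega> ..< S n k \<omega>}"
    have "0 \<le> S n (k+1) \<omega>" using assms by (intro S_nonneg) auto
    hence "s \<in> {0..w}" using s assms by auto
    thus "s \<in> {s \<in> {0..w}. lineages n \<omega> s = k}" using lin_eq[OF assms(1), of s k] assms s by (auto simp: cond_S)
  qed
  moreover have "\<omega> k \<ge> 0" using assms by (auto simp: pos_def)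
  ultimately show ?thesis unfolding occ_time_def using S_step[OF assms(4), of \<omega>] by simp
qed

lemma occ_2: assumes "pos n \<omega>" "2 \<le> n" "S n 3 \<omega> \<le> w" "w < S n 3 \<omega> + \<omega> 2"
  shows "occ_time n 2 w \<omega> = w - S n 3 \<omega>"
proof -
  have S0: "0 \<le> S n 3 \<omega>" using assms by (intro S_nonneg) auto
  have "{s \<in> {0..w}. lineages n \<omega> s = 2} = {S n 3 \<omega> .. w}"
  proof safe
    fix s assume "s \<in> {0..w}" "lineages n \<omega> s = 2"
    thus "s \<in> {S n 3 \<omega> .. w}" using lin2[OF assms(1), of s] assms by auto
  next
    fix s assume s: "s \<in> {S n 3 \<omega> .. w}"
    thus "s \<in> {0..w}" using S0 by auto
    thus "lineages n \<omega> s = 2" using lin2[OF assms(1), of s] assms s by auto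
  qed
  thus ?thesis unfolding occ_time_def using assms by simp
qed

lemma occ_1: assumes "pos n \<omega>" "2 \<le> n" "S n 3 \<omega> + \<omega> 2 \<le> w"
  shows "occ_time n 1 w \<omega> = w - (S n 3 \<omega> + \<omega> 2)"
proof -
  have S0: "0 \<le> S n 3 \<omega>" "0 \<le> \<omega> 2" using assms by (auto intro: S_nonneg simp: pos_def)
  have "{s \<in> {0..w}. lineages n \<omega> s = 1} = {S n 3 \<omega> + \<omega> 2 .. w}"
  proof safe
    fix s assume "s \<in> {0..w}" "lineages n \<omega> s = 1"
    thus "s \<in> {S n 3 \<omega> + \<omega> 2 .. w}" using lin1[OF assms(1), of s] assms by auto
  next
    fix s assume s: "s \<in> {S n 3 \<omega> + \<omega> 2 .. w}"
    thus "s \<in> {0..w}" using S0 by auto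
    thus "lineages n \<omega> s = 1" using lin1[OF assms(1), of s] assms s by auto
  qed
  thus ?thesis unfolding occ_time_def using assms by simp
qed


lemma tail:
  assumes "0 \<le> a"
  shows "(\<integral>\<^sup>+x. ennreal (exponential_density 1 x) * indicator {a<..} x \<partial>lborel) = ennreal (exp (-a))"
proof -
  have "(\<integral>\<^sup>+x. ennreal (exponential_density 1 x) * indicator {a<..} x \<partial>lborel)
      = (\<integral>\<^sup>+x. ennreal (exp (-x)) * indicator {a..} x \<partial>lborel)"
  proof (rule nn_integral_cong_AE)
    show "AE x in lborel. ennreal (exponential_density 1 x) * indicator {a<..} x = ennreal (exp (-x)) * indicator {a..} x"
      using AE_lborel_singleton[of a] by eventually_elim (use assms in \<open>auto simp: exponential_density_def indicator_def\<close>)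
  qed
  also have "\<dots> = ennreal (0 - (- exp (-a)))"
  proof -
    have lim: "((\<lambda>x::real. - exp (- x)) \<longlongrightarrow> 0) at_top"
    proof -
      have "((\<lambda>x::real. exp (- x)) \<longlongrightarrow> 0) at_top"
        by (intro filterlim_compose[OF exp_at_bot] filterlim_uminus_at_bot_at_top)
      from tendsto_minus[OF this] show ?thesis by simp
    qed
    show ?thesis
      by (rule nn_integral_FTC_atLeast[where F="\<lambda>x. - exp (- x)" and T=0 and f="\<lambda>x. exp(-x)" and a=a, OF _ _ _ lim])
        (auto intro!: derivative_eq_intros)
  qed
  finally show ?thesis by simp
qed

lemma EM2: "EM 2 = density lborel (\<lambda>x. ennreal (exponential_density 1 x))"
  by (simp add: EM_def)

lemma oneD:
  fixes g0 :: "real \<Rightarrow> ennreal"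
  assumes [measurable]: "g0 \<in> borel_measurable borel" and s: "0 \<le> s"
  shows "(\<integral>\<^sup>+x. (\<integral>\<^sup>+w. indicator {0..t} w * (if 0 \<le> x \<and> s \<le> w \<and> w < s + x then g0 (w - s) else 0) \<partial>lborel) \<partial>EM 2)
       = (\<integral>\<^sup>+x. (if 0 \<le> x \<and> s + x \<le> t then g0 x else 0) \<partial>EM 2)"
    (is "?L = ?R")
proof -
  let ?ed = "\<lambda>x. ennreal (exponential_density 1 x)"
  let ?H = "\<lambda>x w. indicator {0..t} w * (if 0 \<le> x \<and> s \<le> w \<and> w < s + x then g0 (w - s) else 0)"
  have "?L = (\<integral>\<^sup>+x. ?ed x * (\<integral>\<^sup>+w. ?H x w \<partial>lborel) \<partial>lborel)"
    unfolding EM2 by (subst nn_integral_density) auto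
  also have "\<dots> = (\<integral>\<^sup>+x. (\<integral>\<^sup>+w. ?ed x * ?H x w \<partial>lborel) \<partial>lborel)"
    by (intro nn_integral_cong nn_integral_cmult[symmetric]) auto
  also have "\<dots> = (\<integral>\<^sup>+w. (\<integral>\<^sup>+x. ?ed x * ?H x w \<partial>lborel) \<partial>lborel)"
    by (rule lborel_pair.Fubini'[symmetric]) measurable
  also have "\<dots> = (\<integral>\<^sup>+w. indicator {0..t} w * (if s \<le> w then g0 (w - s) * ennreal (exp (-(w - s))) else 0) \<partial>lborel)"
  proof (intro nn_integral_cong)
    fix w :: real
    show "(\<integral>\<^sup>+x. ?ed x * ?H x w \<partial>lborel) = indicator {0..t} w * (if s \<le> w then g0 (w - s) * ennreal (exp (-(w - s))) else 0)"
    proof (cases "s \<le> w")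
      case True
      have "(\<integral>\<^sup>+x. ?ed x * ?H x w \<partial>lborel) = (\<integral>\<^sup>+x. (indicator {0..t} w * g0 (w - s)) * (?ed x * indicator {w - s<..} x) \<partial>lborel)"
        using True by (intro nn_integral_cong) (auto simp: indicator_def mult_ac)
      also have "\<dots> = indicator {0..t} w * g0 (w - s) * (\<integral>\<^sup>+x. ?ed x * indicator {w - s<..} x \<partial>lborel)"
        by (rule nn_integral_cmult) simp
      also have "\<dots> = indicator {0..t} w * g0 (w - s) * ennreal (exp (-(w - s)))"
        using True by (subst tail) auto
      finally show ?thesis using True by (simp add: mult.assoc)
    qed simp
  qed
  also have "\<dots> = (\<integral>\<^sup>+x. indicator {0..t} (s + x) * (if s \<le> s + x then g0 (s + x - s) * ennreal (exp (-(s + x - s))) else 0) \<partial>lborel)"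
  proof -
    define Fw where "Fw = (\<lambda>w. indicator {0..t} w * (if s \<le> w then g0 (w - s) * ennreal (exp (-(w - s))) else 0))"
    have [measurable]: "Fw \<in> borel_measurable borel" unfolding Fw_def by measurable
    have "(\<integral>\<^sup>+x. Fw x \<partial>lborel) = (\<integral>\<^sup>+x. Fw (s + x) \<partial>lborel)"
      using nn_integral_real_affine[of Fw 1 s] by simp
    thus ?thesis unfolding Fw_def .
  qed
  also have "\<dots> = (\<integral>\<^sup>+x. ?ed x * (if 0 \<le> x \<and> s + x \<le> t then g0 x else 0) \<partial>lborel)"
    using s by (intro nn_integral_cong) (auto simp: indicator_def exponential_density_def mult.commute)
  also have "\<dots> = ?R"
    unfolding EM2 by (subst nn_integral_density) auto
  finally show ?thesis .
qed


lemma pos_meas[measurable]: "Measurable.pred (kingman_space n) (pos n)"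
  unfolding pos_def using comp_meas[of _ n] by measurable

lemma S_meas[measurable]: "S n l \<in> borel_measurable (kingman_space n)"
  unfolding S_def using comp_meas[of _ n] by measurable

lemma comp2_meas[measurable]: "(\<lambda>\<omega>. \<omega> 2) \<in> borel_measurable (kingman_space n)"
  by (rule comp_meas)

lemma S3_upd: "S n 3 ((fun_upd \<omega> 2 x)) = S n 3 \<omega>"
  unfolding S_def by (intro sum.cong) auto

lemma master:
  fixes c :: "(nat \<Rightarrow> real) \<Rightarrow> ennreal" and g :: "(nat \<Rightarrow> real) \<Rightarrow> real \<Rightarrow> ennreal"
  assumes n: "2 \<le> n"
  and [measurable]: "c \<in> borel_measurable (kingman_space n)"
  and [measurable]: "(\<lambda>(\<omega>, x). g \<omega> x) \<in> borel_measurable (kingman_space n \<Otimes>\<^sub>M borel)"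
  and cind: "\<And>\<omega> x. c ((fun_upd \<omega> 2 x)) = c ((fun_upd \<omega> 2 0))"
  and gind: "\<And>\<omega> x. g ((fun_upd \<omega> 2 x)) = g ((fun_upd \<omega> 2 0))"
  shows "(\<integral>\<^sup>+w. (\<integral>\<^sup>+\<omega>. indicator {0..t} w * (if pos n \<omega> \<and> S n 3 \<omega> \<le> w \<and> w < S n 3 \<omega> + \<omega> 2 then c \<omega> * g \<omega> (w - S n 3 \<omega>) else 0) \<partial>kingman_space n) \<partial>lborel)
    = (\<integral>\<^sup>+\<omega>. (if pos n \<omega> \<and> S n 3 \<omega> + \<omega> 2 \<le> t then c \<omega> * g \<omega> (\<omega> 2) else 0) \<partial>kingman_space n)"
proof -
  let ?K = "kingman_space n"
  define F where "F w \<omega> = indicator {0..t} w * (if pos n \<omega> \<and> S n 3 \<omega> \<le> w \<and> w < S n 3 \<omega> + \<omega> 2 then c \<omega> * g \<omega> (w - S n 3 \<omega>) else 0)" for w \<omega>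
  define G where "G \<omega> = (if pos n \<omega> \<and> S n 3 \<omega> + \<omega> 2 \<le> t then c \<omega> * g \<omega> (\<omega> 2) else 0)" for \<omega>
  have Fm[measurable]: "(\<lambda>(\<omega>, w). F w \<omega>) \<in> borel_measurable (?K \<Otimes>\<^sub>M lborel)"
    unfolding F_def by measurable
  have Gm[measurable]: "G \<in> borel_measurable ?K" unfolding G_def by measurable
  have psf: "pair_sigma_finite ?K lborel"
    by (intro pair_sigma_finite.intro prob_space_imp_sigma_finite[OF prob_KS] lborel.sigma_finite_measure_axioms)
  have 1: "(\<integral>\<^sup>+w. (\<integral>\<^sup>+\<omega>. F w \<omega> \<partial>?K) \<partial>lborel) = (\<integral>\<^sup>+\<omega>. (\<integral>\<^sup>+w. F w \<omega> \<partial>lborel) \<partial>?K)"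
    by (rule pair_sigma_finite.Fubini'[OF psf]) (use Fm in simp)
  have Hm: "(\<lambda>\<omega>. \<integral>\<^sup>+w. F w \<omega> \<partial>lborel) \<in> borel_measurable ?K"
    using Fm by measurable
  have I: "{2..n} = insert 2 {3..n}" using n by auto
  have K2: "?K = PiM (insert 2 {3..n}) EM" unfolding KS I ..
  let ?R = "PiM {3..n} EM"
  have 2: "(\<integral>\<^sup>+\<omega>. (\<integral>\<^sup>+w. F w \<omega> \<partial>lborel) \<partial>?K) = (\<integral>\<^sup>+x. (\<integral>\<^sup>+\<tau>. (\<integral>\<^sup>+w. F w (fun_upd x 2 \<tau>) \<partial>lborel) \<partial>EM 2) \<partial>?R)"
    unfolding K2 by (rule product_sigma_finite.product_nn_integral_insert[OF psfEM]) (use Hm K2 in auto)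
  have 3: "(\<integral>\<^sup>+\<omega>. G \<omega> \<partial>?K) = (\<integral>\<^sup>+x. (\<integral>\<^sup>+\<tau>. G (fun_upd x 2 \<tau>) \<partial>EM 2) \<partial>?R)"
    unfolding K2 by (rule product_sigma_finite.product_nn_integral_insert[OF psfEM]) (use Gm K2 in auto)
  have 4: "(\<integral>\<^sup>+x. (\<integral>\<^sup>+\<tau>. (\<integral>\<^sup>+w. F w (fun_upd x 2 \<tau>) \<partial>lborel) \<partial>EM 2) \<partial>?R) = (\<integral>\<^sup>+x. (\<integral>\<^sup>+\<tau>. G (fun_upd x 2 \<tau>) \<partial>EM 2) \<partial>?R)"
  proof (rule nn_integral_cong)
    fix x assume x: "x \<in> space ?R"
    define s where "s = S n 3 x"
    define C where "C = c (fun_upd x 2 0)"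
    define g0 where "g0 = g (fun_upd x 2 0)"
    have x0: "fun_upd x 2 0 \<in> space ?K" using x n by (auto simp: KS space_PiM PiE_def extensional_def)
    have g0m[measurable]: "(\<lambda>y. C * g0 y) \<in> borel_measurable borel"
      unfolding g0_def using x0 by measurable
    have Su: "S n 3 (fun_upd x 2 \<tau>) = s" for \<tau> unfolding s_def by (rule S3_upd)
    have cu: "c (fun_upd x 2 \<tau>) = C" for \<tau> unfolding C_def by (rule cind)
    have gu: "g (fun_upd x 2 \<tau>) = g0" for \<tau> unfolding g0_def by (rule gind)
    have pu: "pos n (fun_upd x 2 \<tau>) \<longleftrightarrow> (\<forall>j\<in>{3..n}. 0 \<le> x j) \<and> 0 \<le> \<tau>" for \<tau>
      using n by (auto simp: pos_def)
    show "(\<integral>\<^sup>+\<tau>. (\<integral>\<^sup>+w. F w (fun_upd x 2 \<tau>) \<partial>lborel) \<partial>EM 2) = (\<integral>\<^sup>+\<tau>. G (fun_upd x 2 \<tau>) \<partial>EM 2)"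
    proof (cases "\<forall>j\<in>{3..n}. 0 \<le> x j")
      case True
      have s0: "0 \<le> s" unfolding s_def S_def using True by (intro sum_nonneg) auto
      have "(\<integral>\<^sup>+\<tau>. (\<integral>\<^sup>+w. F w (fun_upd x 2 \<tau>) \<partial>lborel) \<partial>EM 2)
          = (\<integral>\<^sup>+\<tau>. (\<integral>\<^sup>+w. indicator {0..t} w * (if 0 \<le> \<tau> \<and> s \<le> w \<and> w < s + \<tau> then C * g0 (w - s) else 0) \<partial>lborel) \<partial>EM 2)"
        unfolding F_def Su cu gu pu using True by simp
      also have "\<dots> = (\<integral>\<^sup>+\<tau>. (if 0 \<le> \<tau> \<and> s + \<tau> \<le> t then C * g0 \<tau> else 0) \<partial>EM 2)"
        by (rule oneD[OF g0m s0])
      also have "\<dots> = (\<integral>\<^sup>+\<tau>. G (fun_upd x 2 \<tau>) \<partial>EM 2)"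
        unfolding G_def Su cu gu pu using True by (intro nn_integral_cong) simp
      finally show ?thesis .
    next
      case False
      hence nF: "(\<forall>j\<in>{3..n}. 0 \<le> x j) = False" by simp
      have "(\<integral>\<^sup>+\<tau>. (\<integral>\<^sup>+w. F w (fun_upd x 2 \<tau>) \<partial>lborel) \<partial>EM 2) = 0"
        unfolding F_def pu nF by simp
      moreover have "(\<integral>\<^sup>+\<tau>. G (fun_upd x 2 \<tau>) \<partial>EM 2) = 0"
        unfolding G_def pu nF by simp
      ultimately show ?thesis by simp
    qed
  qed
  show ?thesis using 1 2 3 4 unfolding F_def G_def by simp
qed


lemma lhs_conv:
  fixes F :: "real \<Rightarrow> (nat \<Rightarrow> real) \<Rightarrow> ennreal"
  assumes Fm[measurable]: "(\<lambda>(w, \<omega>). F w \<omega>) \<in> borel_measurable (lborel \<Otimes>\<^sub>M kingman_space n)"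
  and X: "\<And>w. w \<in> {0..t} \<Longrightarrow> X w = enn2real (\<integral>\<^sup>+\<omega>. F w \<omega> \<partial>kingman_space n)"
  and bnd: "\<And>w \<omega>. F w \<omega> \<le> ennreal B"
  and zero: "\<And>w \<omega>. w \<notin> {0..t} \<Longrightarrow> F w \<omega> = 0"
  shows "(LINT w:{0..t}|lborel. X w) = enn2real (\<integral>\<^sup>+w. (\<integral>\<^sup>+\<omega>. F w \<omega> \<partial>kingman_space n) \<partial>lborel)"
proof -
  let ?K = "kingman_space n"
  interpret K: prob_space ?K by (rule prob_KS)
  define N where "N w = (\<integral>\<^sup>+\<omega>. F w \<omega> \<partial>?K)" for w
  have Nm[measurable]: "N \<in> borel_measurable lborel" unfolding N_def by measurable
  have fin: "N w < \<infinity>" for w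
  proof -
    have "N w \<le> (\<integral>\<^sup>+\<omega>. ennreal B \<partial>?K)" unfolding N_def by (intro nn_integral_mono bnd)
    also have "\<dots> = ennreal B" by (simp add: K.emeasure_space_1)
    finally show ?thesis by (simp add: le_less_trans)
  qed
  have "(LINT w:{0..t}|lborel. X w) = (LINT w:{0..t}|lborel. enn2real (N w))"
    by (intro set_lebesgue_integral_cong) (auto simp: X N_def)
  also have "\<dots> = integral\<^sup>L lborel (\<lambda>w. indicator {0..t} w * enn2real (N w))"
    by (simp add: set_lebesgue_integral_def)
  also have "\<dots> = enn2real (\<integral>\<^sup>+w. ennreal (indicator {0..t} w * enn2real (N w)) \<partial>lborel)"
    by (rule integral_eq_nn_integral) auto
  also have "(\<integral>\<^sup>+w. ennreal (indicator {0..t} w * enn2real (N w)) \<partial>lborel) = (\<integral>\<^sup>+w. N w \<partial>lborel)"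
  proof (rule nn_integral_cong)
    fix w :: real
    show "ennreal (indicator {0..t} w * enn2real (N w)) = N w"
    proof (cases "w \<in> {0..t}")
      case True thus ?thesis using fin[of w] by (simp add: less_top)
    next
      case False thus ?thesis by (simp add: N_def zero)
    qed
  qed
  finally show ?thesis unfolding N_def .
qed

lemma meas_nn: assumes [measurable]: "Measurable.pred (kingman_space n) P"
  shows "measure (kingman_space n) {\<omega>\<in>space (kingman_space n). P \<omega>} = enn2real (\<integral>\<^sup>+\<omega>. (if P \<omega> then 1 else 0) \<partial>kingman_space n)"
proof -
  have "emeasure (kingman_space n) {\<omega>\<in>space (kingman_space n). P \<omega>} = (\<integral>\<^sup>+\<omega>. indicator {\<omega>\<in>space (kingman_space n). P \<omega>} \<omega> \<partial>kingman_space n)"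
    by (rule nn_integral_indicator[symmetric]) measurable
  also have "\<dots> = (\<integral>\<^sup>+\<omega>. (if P \<omega> then 1 else 0) \<partial>kingman_space n)"
    by (intro nn_integral_cong) (auto simp: indicator_def)
  finally show ?thesis by (simp add: measure_def)
qed

lemma q1_eq: assumes "2 \<le> n" "0 \<le> t"
  shows "q n 1 t = measure (kingman_space n) {\<omega>\<in>space (kingman_space n). pos n \<omega> \<and> S n 3 \<omega> + \<omega> 2 \<le> t}"
  unfolding q_def
proof (rule measure_eq_AE)
  show "AE \<omega> in kingman_space n. (\<omega> \<in> {\<omega> \<in> space (kingman_space n). lineages n \<omega> t = 1}) = (\<omega> \<in> {\<omega> \<in> space (kingman_space n). pos n \<omega> \<and> S n 3 \<omega> + \<omega> 2 \<le> t})"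
    using AE_pos[of n] by eventually_elim (use assms lin1 in auto)
qed measurable

lemma q2_eq: assumes "2 \<le> n" "0 \<le> t"
  shows "q n 2 t = measure (kingman_space n) {\<omega>\<in>space (kingman_space n). pos n \<omega> \<and> S n 3 \<omega> \<le> t \<and> t < S n 3 \<omega> + \<omega> 2}"
  unfolding q_def
proof (rule measure_eq_AE)
  show "AE \<omega> in kingman_space n. (\<omega> \<in> {\<omega> \<in> space (kingman_space n). lineages n \<omega> t = 2}) = (\<omega> \<in> {\<omega> \<in> space (kingman_space n). pos n \<omega> \<and> S n 3 \<omega> \<le> t \<and> t < S n 3 \<omega> + \<omega> 2})"
    using AE_pos[of n] by eventually_elim (use assms lin2 in auto)
qed measurable

lemma qocc_eq:
  fixes E :: "(nat \<Rightarrow> real) \<Rightarrow> real"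
  assumes [measurable]: "E \<in> borel_measurable (kingman_space n)"
  and nn: "\<And>\<omega>. 0 \<le> E \<omega>"
  and ae: "\<And>\<omega>. pos n \<omega> \<Longrightarrow> occ_time n k t \<omega> * indicator {\<omega>. lineages n \<omega> t = l} \<omega> = E \<omega>"
  shows "q_occ n l k t = enn2real (\<integral>\<^sup>+\<omega>. ennreal (E \<omega>) \<partial>kingman_space n)"
proof -
  have im: "(\<lambda>\<omega>. indicator {\<omega>. lineages n \<omega> t = l} \<omega> :: real) \<in> borel_measurable (kingman_space n)"
    by (simp add: indicator_def)
  have "q_occ n l k t = integral\<^sup>L (kingman_space n) E"
    unfolding q_occ_def
    by (rule integral_cong_AE) (use im AE_pos[of n] ae in \<open>auto elim!: AE_mp\<close>)
  also have "\<dots> = enn2real (\<integral>\<^sup>+\<omega>. ennreal (E \<omega>) \<partial>kingman_space n)"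
    by (rule integral_eq_nn_integral) (auto simp: nn)
  finally show ?thesis .
qed


lemma part1:
  assumes n: "2 \<le> n" and t: "0 \<le> t"
  shows "(LINT w:{0..t}|lborel. q n 2 w) = q n 1 t"
proof -
  let ?K = "kingman_space n"
  let ?F = "\<lambda>w \<omega>. indicator {0..t} w * (if pos n \<omega> \<and> S n 3 \<omega> \<le> w \<and> w < S n 3 \<omega> + \<omega> 2 then (1::ennreal) * 1 else 0)"
  have "(LINT w:{0..t}|lborel. q n 2 w) = enn2real (\<integral>\<^sup>+w. (\<integral>\<^sup>+\<omega>. ?F w \<omega> \<partial>?K) \<partial>lborel)"
  proof (rule lhs_conv[where B=1])
    show "(\<lambda>(w, \<omega>). ?F w \<omega>) \<in> borel_measurable (lborel \<Otimes>\<^sub>M ?K)" by measurable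
  next
    fix w :: real assume w: "w \<in> {0..t}"
    have "q n 2 w = measure ?K {\<omega>\<in>space ?K. pos n \<omega> \<and> S n 3 \<omega> \<le> w \<and> w < S n 3 \<omega> + \<omega> 2}"
      using w n by (intro q2_eq) auto
    also have "\<dots> = enn2real (\<integral>\<^sup>+\<omega>. (if pos n \<omega> \<and> S n 3 \<omega> \<le> w \<and> w < S n 3 \<omega> + \<omega> 2 then 1 else 0) \<partial>?K)"
      by (rule meas_nn) measurable
    also have "\<dots> = enn2real (\<integral>\<^sup>+\<omega>. ?F w \<omega> \<partial>?K)"
      using w by (intro arg_cong[where f=enn2real] nn_integral_cong) simp
    finally show "q n 2 w = enn2real (\<integral>\<^sup>+\<omega>. ?F w \<omega> \<partial>?K)" .
  qed (auto simp: indicator_def)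
  also have "\<dots> = enn2real (\<integral>\<^sup>+\<omega>. (if pos n \<omega> \<and> S n 3 \<omega> + \<omega> 2 \<le> t then (1::ennreal) * 1 else 0) \<partial>?K)"
    using master[of n "\<lambda>_. 1" "\<lambda>_ _. 1" t] n by simp
  also have "\<dots> = q n 1 t"
  proof -
    have "q n 1 t = measure ?K {\<omega>\<in>space ?K. pos n \<omega> \<and> S n 3 \<omega> + \<omega> 2 \<le> t}"
      by (rule q1_eq[OF n t])
    also have "\<dots> = enn2real (\<integral>\<^sup>+\<omega>. (if pos n \<omega> \<and> S n 3 \<omega> + \<omega> 2 \<le> t then 1 else 0) \<partial>?K)"
      by (rule meas_nn) measurable
    also have "\<dots> = enn2real (\<integral>\<^sup>+\<omega>. (if pos n \<omega> \<and> S n 3 \<omega> + \<omega> 2 \<le> t then (1::ennreal) * 1 else 0) \<partial>?K)"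
      by (intro arg_cong[where f=enn2real] nn_integral_cong) simp
    finally show ?thesis by simp
  qed
  finally show ?thesis .
qed


lemma wk_le: assumes "pos n \<omega>" "3 \<le> k" "k \<le> n" shows "\<omega> k \<le> S n 3 \<omega>"
proof -
  have "S n k \<omega> = \<omega> k + S n (Suc k) \<omega>" using assms by (intro S_step) auto
  moreover have "0 \<le> S n (Suc k) \<omega>" using assms by (intro S_nonneg) auto
  moreover have "S n k \<omega> \<le> S n 3 \<omega>" using assms by (intro S_mono) auto
  ultimately show ?thesis by linarith
qed

lemma part2:
  assumes n: "2 \<le> n" and t: "0 \<le> t" and k: "2 \<le> k" "k \<le> n"
  shows "(LINT w:{0..t}|lborel. q_occ n 2 k w) = q_occ n 1 k t"
proof -
  let ?K = "kingman_space n"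
  define c where "c \<omega> = (if k = 2 then 1 else ennreal (\<omega> k))" for \<omega> :: "nat \<Rightarrow> real"
  define g where "g (\<omega> :: nat \<Rightarrow> real) x = (if k = 2 then ennreal x else 1)" for \<omega> x
  have cm[measurable]: "c \<in> borel_measurable ?K" unfolding c_def using comp_meas[of k n] by measurable
  have gm[measurable]: "(\<lambda>(\<omega>, x). g \<omega> x) \<in> borel_measurable (?K \<Otimes>\<^sub>M borel)" unfolding g_def by measurable
  have cind: "c (fun_upd \<omega> 2 x) = c (fun_upd \<omega> 2 0)" for \<omega> x by (simp add: c_def)
  have gind: "g (fun_upd \<omega> 2 x) = g (fun_upd \<omega> 2 0)" for \<omega> x by (rule ext) (simp add: g_def)
  let ?F = "\<lambda>w \<omega>. indicator {0..t} w * (if pos n \<omega> \<and> S n 3 \<omega> \<le> w \<and> w < S n 3 \<omega> + \<omega> 2 then c \<omega> * g \<omega> (w - S n 3 \<omega>) else 0)"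
  have "(LINT w:{0..t}|lborel. q_occ n 2 k w) = enn2real (\<integral>\<^sup>+w. (\<integral>\<^sup>+\<omega>. ?F w \<omega> \<partial>?K) \<partial>lborel)"
  proof (rule lhs_conv[where B=t])
    show "(\<lambda>(w, \<omega>). ?F w \<omega>) \<in> borel_measurable (lborel \<Otimes>\<^sub>M ?K)" by measurable
  next
    fix w :: real assume w: "w \<in> {0..t}"
    define E where "E \<omega> = (if pos n \<omega> \<and> S n 3 \<omega> \<le> w \<and> w < S n 3 \<omega> + \<omega> 2 then (if k = 2 then w - S n 3 \<omega> else \<omega> k) else 0)" for \<omega>
    have Em: "E \<in> borel_measurable ?K" unfolding E_def using comp_meas[of k n] by measurable
    have "q_occ n 2 k w = enn2real (\<integral>\<^sup>+\<omega>. ennreal (E \<omega>) \<partial>?K)"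
    proof (rule qocc_eq[OF Em])
      fix \<omega> show "0 \<le> E \<omega>" unfolding E_def using k by (auto simp: pos_def)
    next
      fix \<omega> assume p: "pos n \<omega>"
      show "occ_time n k w \<omega> * indicator {\<omega>. lineages n \<omega> w = 2} \<omega> = E \<omega>"
      proof (cases "S n 3 \<omega> \<le> w \<and> w < S n 3 \<omega> + \<omega> 2")
        case True
        have l2: "lineages n \<omega> w = 2" using lin2[OF p _ n, of w] w True by auto
        show ?thesis
        proof (cases "k = 2")
          case True
          thus ?thesis using l2 occ_2[OF p n] \<open>S n 3 \<omega> \<le> w \<and> w < S n 3 \<omega> + \<omega> 2\<close> p by (simp add: E_def)
        next
          case False
          have "S n k \<omega> \<le> S n 3 \<omega>" using p k False by (intro S_mono) auto
          hence "occ_time n k w \<omega> = \<omega> k" using occ_full[OF p _ k] w \<open>S n 3 \<omega> \<le> w \<and> w < S n 3 \<omega> + \<omega> 2\<close> by auto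
          thus ?thesis using l2 False \<open>S n 3 \<omega> \<le> w \<and> w < S n 3 \<omega> + \<omega> 2\<close> p by (simp add: E_def)
        qed
      next
        case False
        have "lineages n \<omega> w \<noteq> 2" using lin2[OF p _ n, of w] w False by auto
        thus ?thesis using False by (auto simp: E_def)
      qed
    qed
    also have "\<dots> = enn2real (\<integral>\<^sup>+\<omega>. ?F w \<omega> \<partial>?K)"
      using w by (intro arg_cong[where f=enn2real] nn_integral_cong) (auto simp: E_def c_def g_def)
    finally show "q_occ n 2 k w = enn2real (\<integral>\<^sup>+\<omega>. ?F w \<omega> \<partial>?K)" .
  next
    fix w :: real and \<omega> :: "nat \<Rightarrow> real"
    show "?F w \<omega> \<le> ennreal t"
    proof (cases "w \<in> {0..t} \<and> pos n \<omega> \<and> S n 3 \<omega> \<le> w \<and> w < S n 3 \<omega> + \<omega> 2")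
      case True
      hence p: "pos n \<omega>" by auto
      have S0: "0 \<le> S n 3 \<omega>" using p by (intro S_nonneg) auto
      show ?thesis
      proof (cases "k = 2")
        case True thus ?thesis using \<open>w \<in> {0..t} \<and> _\<close> S0 by (auto simp: c_def g_def ennreal_leI)
      next
        case False
        hence "\<omega> k \<le> S n 3 \<omega>" using wk_le[OF p _ k(2)] k by auto
        thus ?thesis using \<open>w \<in> {0..t} \<and> _\<close> False by (auto simp: c_def g_def ennreal_leI)
      qed
    next
      case False thus ?thesis by (auto simp: indicator_def)
    qed
  qed auto
  also have "\<dots> = enn2real (\<integral>\<^sup>+\<omega>. (if pos n \<omega> \<and> S n 3 \<omega> + \<omega> 2 \<le> t then c \<omega> * g \<omega> (\<omega> 2) else 0) \<partial>?K)"
    using master[of n c g t, OF n cm gm cind gind] by simp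
  also have "\<dots> = q_occ n 1 k t"
  proof -
    define E where "E \<omega> = (if pos n \<omega> \<and> S n 3 \<omega> + \<omega> 2 \<le> t then \<omega> k else 0)" for \<omega>
    have Em: "E \<in> borel_measurable ?K" unfolding E_def using comp_meas[of k n] by measurable
    have "q_occ n 1 k t = enn2real (\<integral>\<^sup>+\<omega>. ennreal (E \<omega>) \<partial>?K)"
    proof (rule qocc_eq[OF Em])
      fix \<omega> show "0 \<le> E \<omega>" unfolding E_def using k by (auto simp: pos_def)
    next
      fix \<omega> assume p: "pos n \<omega>"
      show "occ_time n k t \<omega> * indicator {\<omega>. lineages n \<omega> t = 1} \<omega> = E \<omega>"
      proof (cases "S n 3 \<omega> + \<omega> 2 \<le> t")
        case True
        have l1: "lineages n \<omega> t = 1" using lin1[OF p t n] True by auto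
        have "S n k \<omega> \<le> S n 2 \<omega>" using p k by (intro S_mono) auto
        hence "occ_time n k t \<omega> = \<omega> k" using occ_full[OF p t k] True S23[OF n, of \<omega>] by auto
        thus ?thesis using l1 True p by (simp add: E_def)
      next
        case False
        have "lineages n \<omega> t \<noteq> 1" using lin1[OF p t n] False by auto
        thus ?thesis using False by (auto simp: E_def)
      qed
    qed
    also have "\<dots> = enn2real (\<integral>\<^sup>+\<omega>. (if pos n \<omega> \<and> S n 3 \<omega> + \<omega> 2 \<le> t then c \<omega> * g \<omega> (\<omega> 2) else 0) \<partial>?K)"
      using k by (intro arg_cong[where f=enn2real] nn_integral_cong) (auto simp: E_def c_def g_def)
    finally show ?thesis by simp
  qed
  finally show ?thesis .
qed


lemma part3:
  assumes n: "2 \<le> n" and t: "0 \<le> t"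
  shows "(LINT w:{0..t}|lborel. (t - w) * q n 2 w) = q_occ n 1 1 t"
proof -
  let ?K = "kingman_space n"
  define c where "c (\<omega> :: nat \<Rightarrow> real) = (1::ennreal)" for \<omega>
  define g where "g \<omega> x = ennreal (t - S n 3 \<omega> - x)" for \<omega> x
  have cm[measurable]: "c \<in> borel_measurable ?K" unfolding c_def by measurable
  have gm[measurable]: "(\<lambda>(\<omega>, x). g \<omega> x) \<in> borel_measurable (?K \<Otimes>\<^sub>M borel)" unfolding g_def by measurable
  have cind: "c (fun_upd \<omega> 2 x) = c (fun_upd \<omega> 2 0)" for \<omega> x by (simp add: c_def)
  have gind: "g (fun_upd \<omega> 2 x) = g (fun_upd \<omega> 2 0)" for \<omega> x by (rule ext) (simp add: g_def S3_upd)
  let ?F = "\<lambda>w \<omega>. indicator {0..t} w * (if pos n \<omega> \<and> S n 3 \<omega> \<le> w \<and> w < S n 3 \<omega> + \<omega> 2 then c \<omega> * g \<omega> (w - S n 3 \<omega>) else 0)"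
  have "(LINT w:{0..t}|lborel. (t - w) * q n 2 w) = enn2real (\<integral>\<^sup>+w. (\<integral>\<^sup>+\<omega>. ?F w \<omega> \<partial>?K) \<partial>lborel)"
  proof (rule lhs_conv[where B=t])
    show "(\<lambda>(w, \<omega>). ?F w \<omega>) \<in> borel_measurable (lborel \<Otimes>\<^sub>M ?K)" by measurable
  next
    fix w :: real assume w: "w \<in> {0..t}"
    have "q n 2 w = measure ?K {\<omega>\<in>space ?K. pos n \<omega> \<and> S n 3 \<omega> \<le> w \<and> w < S n 3 \<omega> + \<omega> 2}"
      using w n by (intro q2_eq) auto
    also have "\<dots> = enn2real (\<integral>\<^sup>+\<omega>. (if pos n \<omega> \<and> S n 3 \<omega> \<le> w \<and> w < S n 3 \<omega> + \<omega> 2 then 1 else 0) \<partial>?K)"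
      by (rule meas_nn) measurable
    finally have "(t - w) * q n 2 w = enn2real (ennreal (t - w)) * enn2real (\<integral>\<^sup>+\<omega>. (if pos n \<omega> \<and> S n 3 \<omega> \<le> w \<and> w < S n 3 \<omega> + \<omega> 2 then 1 else 0) \<partial>?K)"
      using w by simp
    also have "\<dots> = enn2real (ennreal (t - w) * (\<integral>\<^sup>+\<omega>. (if pos n \<omega> \<and> S n 3 \<omega> \<le> w \<and> w < S n 3 \<omega> + \<omega> 2 then 1 else 0) \<partial>?K))"
      by (simp add: enn2real_mult)
    also have "\<dots> = enn2real (\<integral>\<^sup>+\<omega>. ennreal (t - w) * (if pos n \<omega> \<and> S n 3 \<omega> \<le> w \<and> w < S n 3 \<omega> + \<omega> 2 then 1 else 0) \<partial>?K)"
      by (subst nn_integral_cmult) auto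
    also have "\<dots> = enn2real (\<integral>\<^sup>+\<omega>. ?F w \<omega> \<partial>?K)"
      using w by (intro arg_cong[where f=enn2real] nn_integral_cong) (auto simp: c_def g_def)
    finally show "(t - w) * q n 2 w = enn2real (\<integral>\<^sup>+\<omega>. ?F w \<omega> \<partial>?K)" .
  next
    fix w :: real and \<omega> :: "nat \<Rightarrow> real"
    show "?F w \<omega> \<le> ennreal t"
      by (auto simp: indicator_def c_def g_def ennreal_leI)
  qed auto
  also have "\<dots> = enn2real (\<integral>\<^sup>+\<omega>. (if pos n \<omega> \<and> S n 3 \<omega> + \<omega> 2 \<le> t then c \<omega> * g \<omega> (\<omega> 2) else 0) \<partial>?K)"
    using master[of n c g t, OF n cm gm cind gind] by simp
  also have "\<dots> = q_occ n 1 1 t"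
  proof -
    define E where "E \<omega> = (if pos n \<omega> \<and> S n 3 \<omega> + \<omega> 2 \<le> t then t - (S n 3 \<omega> + \<omega> 2) else 0)" for \<omega>
    have Em: "E \<in> borel_measurable ?K" unfolding E_def by measurable
    have "q_occ n 1 1 t = enn2real (\<integral>\<^sup>+\<omega>. ennreal (E \<omega>) \<partial>?K)"
    proof (rule qocc_eq[OF Em])
      fix \<omega> show "0 \<le> E \<omega>" unfolding E_def by auto
    next
      fix \<omega> assume p: "pos n \<omega>"
      show "occ_time n 1 t \<omega> * indicator {\<omega>. lineages n \<omega> t = 1} \<omega> = E \<omega>"
      proof (cases "S n 3 \<omega> + \<omega> 2 \<le> t")
        case True
        have l1: "lineages n \<omega> t = 1" using lin1[OF p t n] True by auto
        thus ?thesis using occ_1[OF p n True] True p by (simp add: E_def)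
      next
        case False
        have "lineages n \<omega> t \<noteq> 1" using lin1[OF p t n] False by auto
        thus ?thesis using False by (auto simp: E_def)
      qed
    qed
    also have "\<dots> = enn2real (\<integral>\<^sup>+\<omega>. (if pos n \<omega> \<and> S n 3 \<omega> + \<omega> 2 \<le> t then c \<omega> * g \<omega> (\<omega> 2) else 0) \<partial>?K)"
      by (intro arg_cong[where f=enn2real] nn_integral_cong) (auto simp: E_def c_def g_def diff_diff_eq)
    finally show ?thesis by simp
  qed
  finally show ?thesis .
qed

theorem lemma2:
  fixes n k :: nat and t :: real
  assumes "n \<ge> 2" and "t \<ge> 0" and "2 \<le> k" and "k \<le> n"
  shows "(LINT w:{0..t}|lborel. q n 2 w) = q n 1 t
    \<and> (LINT w:{0..t}|lborel. q_occ n 2 k w) = q_occ n 1 k t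
    \<and> (LINT w:{0..t}|lborel. (t - w) * q n 2 w) = q_occ n 1 1 t"
  using part1[OF assms(1,2)] part2[OF assms] part3[OF assms(1,2)] by blast

end
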